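(* Let $(L,d)$ be a metric locale and $b\in L$ with $b\ne0$. Then there exist $c\in L$ with $0\ne c\le b$ and $n\in\mathbb{N}$ such that for every $x\in L$ with $d(x)<\frac1n$, either $x\wedge b^*=0$ or $x\wedge c=0$.
   Context: A frame (locale) $L$ is a complete lattice in which finite meets distribute over arbitrary joins; $b^*$ denotes the pseudocomplement of $b$. A diameter on $L$ is a map $d\colon L\to[0,+\infty]$ with (D1) $d(0)=0$; (D2) $a\le b\Rightarrow d(a)\le d(b)$; (D3) $a\wedge b\neq 0\Rightarrow d(a\vee b)\le d(a)+d(b)$; (D4) for every $\varepsilon>0$, $\bigvee\{a\in L\mid d(a)<\varepsilon\}=1$. Write $y\lhd_\varepsilon a$ if for every $c\in L$ with $d(c)<\varepsilon$, $c\wedge y\ne0$ implies $c\le a$. The diameter is admissible if $a=\bigvee\{y\in L\mid y\lhd_\varepsilon a \text{ for some }\varepsilon>0\}$ for all $a\in L$; a metric locale is a pair $(L,d)$ with $d$ an admissible diameter. *)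

theory Defs
  imports "HOL-Analysis.Analysis" "HOL-Library.Extended_Nonnegative_Real"
begin

definition frame_law :: "'a::complete_lattice itself \<Rightarrow> bool" where
  "frame_law _ \<longleftrightarrow> (\<forall>(a::'a) S. inf a (Sup S) = Sup ((\<lambda>s. inf a s) ` S))"

definition pcomp :: "'a::complete_lattice \<Rightarrow> 'a" where
  "pcomp b = Sup {a. inf a b = bot}"

definition diameter :: "('a::complete_lattice \<Rightarrow> ennreal) \<Rightarrow> bool" where
  "diameter d \<longleftrightarrow>
     d bot = 0 \<and>
     (\<forall>a b. a \<le> b \<longrightarrow> d a \<le> d b) \<and>
     (\<forall>a b. inf a b \<noteq> bot \<longrightarrow> d (sup a b) \<le> d a + d b) \<and>
     (\<forall>\<epsilon>::real. \<epsilon> > 0 \<longrightarrow> Sup {a. d a < ennreal \<epsilon>} = top)"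

definition wbelow :: "('a::complete_lattice \<Rightarrow> ennreal) \<Rightarrow> real \<Rightarrow> 'a \<Rightarrow> 'a \<Rightarrow> bool" where
  "wbelow d \<epsilon> y a \<longleftrightarrow> (\<forall>c. d c < ennreal \<epsilon> \<longrightarrow> inf c y \<noteq> bot \<longrightarrow> c \<le> a)"

definition admissible :: "('a::complete_lattice \<Rightarrow> ennreal) \<Rightarrow> bool" where
  "admissible d \<longleftrightarrow> (\<forall>a. a = Sup {y. \<exists>\<epsilon>::real. \<epsilon> > 0 \<and> wbelow d \<epsilon> y a})"

definition metric_locale :: "('a::complete_lattice \<Rightarrow> ennreal) \<Rightarrow> bool" where
  "metric_locale d \<longleftrightarrow> frame_law TYPE('a) \<and> diameter d \<and> admissible d"

end

theory Submission
  imports Defs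
begin

theorem lemma5p3:
  fixes d :: "'a::complete_lattice \<Rightarrow> ennreal" and b :: 'a
  assumes "metric_locale d" and "b \<noteq> bot"
  shows "\<exists>c n. c \<noteq> bot \<and> c \<le> b \<and> n \<ge> (1::nat) \<and>
           (\<forall>x. d x < ennreal (1 / real n) \<longrightarrow> inf x (pcomp b) = bot \<or> inf x c = bot)"
proof -
  have fr: "frame_law TYPE('a)" and adm: "admissible d"
    using assms(1) unfolding metric_locale_def by auto
  have beq: "b = Sup {y. \<exists>\<epsilon>::real. \<epsilon> > 0 \<and> wbelow d \<epsilon> y b}"
    using adm unfolding admissible_def by blast
  obtain y where yin: "y \<in> {y. \<exists>\<epsilon>::real. \<epsilon> > 0 \<and> wbelow d \<epsilon> y b}" and ynz: "y \<noteq> bot"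
  proof (rule ccontr)
    assume "\<not> thesis"
    then have "\<forall>y\<in>{y. \<exists>\<epsilon>::real. \<epsilon> > 0 \<and> wbelow d \<epsilon> y b}. y = bot" using that by blast
    then have "Sup {y. \<exists>\<epsilon>::real. \<epsilon> > 0 \<and> wbelow d \<epsilon> y b} = bot"
      by (simp add: Sup_bot_conv(1))
    with beq assms(2) show False by simp
  qed
  have yb: "y \<le> b" using yin beq by (metis Sup_upper)
  obtain \<epsilon> :: real where ep: "\<epsilon> > 0" "wbelow d \<epsilon> y b" using yin by blast
  obtain m :: nat where m: "inverse (real (Suc m)) < \<epsilon>" using ep(1) reals_Archimedean by blast
  define n where "n = Suc m"
  have n1: "n \<ge> 1" unfolding n_def by simp
  have nlt: "1 / real n < \<epsilon>" using m unfolding n_def by (simp add: divide_inverse)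
  have bp: "inf b (pcomp b) = bot"
  proof -
    have "inf b (pcomp b) = Sup ((\<lambda>s. inf b s) ` {a. inf a b = bot})"
      using fr unfolding frame_law_def pcomp_def by blast
    also have "\<dots> = bot" by (auto simp: Sup_bot_conv inf_commute)
    finally show ?thesis .
  qed
  have "\<forall>x. d x < ennreal (1 / real n) \<longrightarrow> inf x (pcomp b) = bot \<or> inf x y = bot"
  proof (intro allI impI)
    fix x assume dx: "d x < ennreal (1 / real n)"
    have "ennreal (1 / real n) \<le> ennreal \<epsilon>" using nlt by (simp add: ennreal_leI)
    then have dx2: "d x < ennreal \<epsilon>" using dx by order
    show "inf x (pcomp b) = bot \<or> inf x y = bot"
    proof (cases "inf x y = bot")
      case False
      then have "x \<le> b" using ep(2) dx2 unfolding wbelow_def by blast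
      then have "inf x (pcomp b) \<le> inf b (pcomp b)" by (meson inf_mono order_refl)
      then show ?thesis using bp by (simp add: bot_unique)
    qed simp
  qed
  then show ?thesis using ynz yb n1 by blast
qed

end
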